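(* Let $S_\lambda\in\mathcal B(\ell^2(V))$ be a weighted shift on a directed tree $\mathcal T=(V,E)$ with weights $\lambda=\{\lambda_v\}_{v\in V^\circ}$. Then $S_\lambda^*S_\lambda(\ker S_\lambda^* )\subseteq\ker S_\lambda^*$ if and only if there exists a family $\{\alpha_v\}_{v\in V^+_\lambda}\subseteq\mathbb R_+$ with $\|S_\lambda e_u\|=\alpha_{\mathrm{par}(u)}$ for all $u\in V^\circ$ with $\lambda_u\neq0$. Moreover, if $\mathcal T$ is leafless and all weights are nonzero, this is equivalent to the existence of $\{\alpha_v\}_{v\in V}\subseteq\mathbb R_+$ with $\|S_\lambda e_u\|=\alpha_{\mathrm{par}(u)}$ for all $u\in V^\circ$.
   Context: A directed tree $\mathcal T=(V,E)$ is a connected directed graph without circuits in which each vertex has at most one parent; a root is a vertex without parent (at most one exists). $V^\circ=V$ if $\mathcal T$ is rootless and $V^\circ=V\setminus\{\omega\}$ if $\omega$ is the root. For $v\in V^\circ$, $\mathrm{par}(v)$ is the unique $u$ with $(u,v)\in E$; $\mathrm{Chi}(u)=\{v:(u,v)\in E\}$; $\mathcal T$ is leafless if $\mathrm{Chi}(u)\neq\emptyset$ for all $u$. $e_u$ is the indicator of $\{u\}$ in $\ell^2(V)$. The weighted shift with weights $\lambda$ is $(S_\lambda f)(v)=\lambda_vf(\mathrm{par}(v))$ for $v\in V^\circ$ and $(S_\lambda f)(\omega)=0$ at the root; it is bounded iff $\sup_u\sum_{v\in\mathrm{Chi}(u)}|\lambda_v|^2<\infty$, and then $\|S_\lambda e_u\|^2=\sum_{v\in\mathrm{Chi}(u)}|\lambda_v|^2$.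 $V^+_\lambda=\{u\in V:\|S_\lambda e_u\|>0\}$. *)

theory Defs
  imports "HOL-Analysis.Analysis"
begin

text \<open>The vertex set V is the (arbitrary) type 'v; the edge set is
  E :: ('v \<times> 'v) set. Following Jablonski--Jung--Stochel: a directed graph has no
  loops, a directed tree is connected (in the undirected sense), has no (directed)
  circuits, and each vertex has at most one parent.\<close>

definition directed_tree :: "('v \<times> 'v) set \<Rightarrow> bool" where
  "directed_tree E \<longleftrightarrow>
     (\<forall>u v. (u, v) \<in> E \<longrightarrow> u \<noteq> v) \<and>
     (\<forall>u v. (u, v) \<in> (E \<union> E\<inverse>)\<^sup>*) \<and>
     acyclic E \<and>
     (\<forall>u1 u2 v. (u1, v) \<in> E \<and> (u2, v) \<in> E \<longrightarrow> u1 = u2)"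

definition Vcirc :: "('v \<times> 'v) set \<Rightarrow> 'v set" where
  "Vcirc E = {v. \<exists>u. (u, v) \<in> E}"

definition par :: "('v \<times> 'v) set \<Rightarrow> 'v \<Rightarrow> 'v" where
  "par E v = (THE u. (u, v) \<in> E)"

definition Chi :: "('v \<times> 'v) set \<Rightarrow> 'v \<Rightarrow> 'v set" where
  "Chi E u = {v. (u, v) \<in> E}"

definition leafless :: "('v \<times> 'v) set \<Rightarrow> bool" where
  "leafless E \<longleftrightarrow> (\<forall>u. Chi E u \<noteq> {})"

definition ell2 :: "('v \<Rightarrow> complex) set" where
  "ell2 = {f. (\<lambda>v. (cmod (f v))\<^sup>2) summable_on UNIV}"

definition ell2_norm :: "('v \<Rightarrow> complex) \<Rightarrow> real" where
  "ell2_norm f = sqrt (\<Sum>\<^sub>\<infinity>v. (cmod (f v))\<^sup>2)"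

definition ell2_inner :: "('v \<Rightarrow> complex) \<Rightarrow> ('v \<Rightarrow> complex) \<Rightarrow> complex" where
  "ell2_inner f g = (\<Sum>\<^sub>\<infinity>v. f v * cnj (g v))"

definition evec :: "'v \<Rightarrow> 'v \<Rightarrow> complex" where
  "evec u = (\<lambda>v. if v = u then 1 else 0)"

definition ell2_bounded :: "(('v \<Rightarrow> complex) \<Rightarrow> ('v \<Rightarrow> complex)) \<Rightarrow> bool" where
  "ell2_bounded T \<longleftrightarrow>
     (\<forall>f\<in>ell2. T f \<in> ell2) \<and>
     (\<forall>f\<in>ell2. \<forall>g\<in>ell2. \<forall>a b. T (\<lambda>v. a * f v + b * g v) = (\<lambda>v. a * T f v + b * T g v)) \<and>
     (\<exists>C. \<forall>f\<in>ell2. ell2_norm (T f) \<le> C * ell2_norm f)"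

definition ell2_adj :: "(('v \<Rightarrow> complex) \<Rightarrow> ('v \<Rightarrow> complex)) \<Rightarrow> ('v \<Rightarrow> complex) \<Rightarrow> ('v \<Rightarrow> complex)" where
  "ell2_adj T g = (THE h. h \<in> ell2 \<and> (\<forall>f\<in>ell2. ell2_inner (T f) g = ell2_inner f h))"

definition ell2_ker :: "(('v \<Rightarrow> complex) \<Rightarrow> ('v \<Rightarrow> complex)) \<Rightarrow> ('v \<Rightarrow> complex) set" where
  "ell2_ker T = {g \<in> ell2. T g = (\<lambda>_. 0)}"

text \<open>Only the values of \<open>lam\<close> on \<open>V\<degree>\<close> matter.\<close>
definition wshift :: "('v \<times> 'v) set \<Rightarrow> ('v \<Rightarrow> complex) \<Rightarrow> ('v \<Rightarrow> complex) \<Rightarrow> ('v \<Rightarrow> complex)" where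
  "wshift E lam f = (\<lambda>v. if v \<in> Vcirc E then lam v * f (par E v) else 0)"

definition Vplus :: "('v \<times> 'v) set \<Rightarrow> ('v \<Rightarrow> complex) \<Rightarrow> 'v set" where
  "Vplus E lam = {u. ell2_norm (wshift E lam (evec u)) > 0}"

end

theory Submission
  imports Defs
begin


lemma amgm: "(a::real) * b \<le> (a\<^sup>2 + b\<^sup>2) / 2"
proof -
  have "0 \<le> (a - b)\<^sup>2" by simp
  thus ?thesis by (simp add: power2_eq_square algebra_simps)
qed

lemma infsum_fin_supp:
  fixes t :: "'a \<Rightarrow> 'b::{comm_monoid_add,t2_space}"
  assumes "finite F" "\<And>v. v \<notin> F \<Longrightarrow> t v = 0"
  shows "infsum t A = sum t (A \<inter> F)"
proof -
  have "infsum t A = infsum t (A \<inter> F)"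
    by (rule infsum_cong_neutral) (use assms in auto)
  also have "\<dots> = sum t (A \<inter> F)" using assms by simp
  finally show ?thesis .
qed

lemma cs_real:
  fixes a b :: "'a \<Rightarrow> real"
  assumes a0: "\<And>x. a x \<ge> 0" and b0: "\<And>x. b x \<ge> 0"
    and sa: "(\<lambda>x. (a x)\<^sup>2) summable_on A" and sb: "(\<lambda>x. (b x)\<^sup>2) summable_on A"
  shows "(\<lambda>x. a x * b x) summable_on A"
    and "(infsum (\<lambda>x. a x * b x) A)\<^sup>2 \<le> infsum (\<lambda>x. (a x)\<^sup>2) A * infsum (\<lambda>x. (b x)\<^sup>2) A"
proof -
  have "(\<lambda>x. ((a x)\<^sup>2 + (b x)\<^sup>2) * (1/2)) summable_on A"
    by (intro summable_on_cmult_left summable_on_add sa sb)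
  hence sab: "(\<lambda>x. ((a x)\<^sup>2 + (b x)\<^sup>2)/2) summable_on A" by simp
  show sp: "(\<lambda>x. a x * b x) summable_on A"
    apply (rule summable_on_comparison_test[OF sab])
    subgoal for x using amgm[of "a x" "b x"] by simp
    using a0 b0 by simp
  define P where "P = infsum (\<lambda>x. a x * b x) A"
  define Sa where "Sa = infsum (\<lambda>x. (a x)\<^sup>2) A"
  define Sb where "Sb = infsum (\<lambda>x. (b x)\<^sup>2) A"
  have P0: "P \<ge> 0" unfolding P_def by (rule infsum_nonneg) (simp add: a0 b0)
  have Sa0: "Sa \<ge> 0" unfolding Sa_def by (rule infsum_nonneg) simp
  have Sb0: "Sb \<ge> 0" unfolding Sb_def by (rule infsum_nonneg) simp
  have key: "2 * P * t \<le> t\<^sup>2 * Sa + Sb" if t: "t > 0" for t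
  proof -
    have pw: "\<And>x. a x * b x \<le> (t * (a x)\<^sup>2 + (b x)\<^sup>2 * (1/t)) * (1/2)"
    proof -
      fix x
      have "(t * a x) * b x \<le> ((t * a x)\<^sup>2 + (b x)\<^sup>2) / 2" by (rule amgm)
      moreover have "t * ((t*(a x)\<^sup>2 + (b x)\<^sup>2*(1/t))*(1/2)) = ((t * a x)\<^sup>2 + (b x)\<^sup>2)/2"
        using t by (simp add: field_simps power2_eq_square)
      ultimately have "t * (a x * b x) \<le> t * ((t*(a x)\<^sup>2 + (b x)\<^sup>2*(1/t))*(1/2))" by simp
      thus "a x * b x \<le> (t * (a x)\<^sup>2 + (b x)\<^sup>2 * (1/t)) * (1/2)" using t
        by (rule mult_left_le_imp_le)
    qed
    have s1: "(\<lambda>x. t * (a x)\<^sup>2) summable_on A" by (intro summable_on_cmult_right sa)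
    have s2: "(\<lambda>x. (b x)\<^sup>2 * (1/t)) summable_on A" by (intro summable_on_cmult_left sb)
    have "P \<le> infsum (\<lambda>x. (t * (a x)\<^sup>2 + (b x)\<^sup>2 * (1/t)) * (1/2)) A"
      unfolding P_def
      by (intro infsum_mono sp summable_on_cmult_left summable_on_add s1 s2 pw)
    also have "\<dots> = infsum (\<lambda>x. t * (a x)\<^sup>2 + (b x)\<^sup>2 * (1/t)) A * (1/2)"
      by (rule infsum_cmult_left) (intro summable_on_add s1 s2)
    also have "infsum (\<lambda>x. t * (a x)\<^sup>2 + (b x)\<^sup>2 * (1/t)) A = t * Sa + Sb * (1/t)"
      unfolding Sa_def Sb_def
      by (subst infsum_add[OF s1 s2]) (simp only: infsum_cmult_right[OF sa] infsum_cmult_left[OF sb])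
    finally have "P \<le> (t * Sa + Sb * (1/t)) * (1/2)" .
    hence "2 * P * t \<le> (t * Sa + Sb * (1/t)) * t" using t by (simp add: mult_right_mono)
    also have "\<dots> = t\<^sup>2 * Sa + Sb" using t by (simp add: power2_eq_square field_simps)
    finally show ?thesis .
  qed
  have "P\<^sup>2 \<le> Sa * Sb"
  proof (cases "P = 0")
    case True thus ?thesis using Sa0 Sb0 by simp
  next
    case False
    hence Pp: "P > 0" using P0 by simp
    show ?thesis
    proof (cases "Sa = 0")
      case True
      have "2 * P * ((Sb+1)/(2*P)) \<le> Sb" using key[of "(Sb+1)/(2*P)"] Pp Sb0 True by simp
      thus ?thesis using Pp by simp
    next
      case False
      hence Sap: "Sa > 0" using Sa0 by simp
      have "2 * P * (P/Sa) \<le> (P/Sa)\<^sup>2 * Sa + Sb" using key[of "P/Sa"] Pp Sap by simp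
      hence "2 * P\<^sup>2 \<le> P\<^sup>2 + Sb * Sa" using Sap by (simp add: power2_eq_square field_simps)
      thus ?thesis by (simp add: mult.commute)
    qed
  qed
  thus "(infsum (\<lambda>x. a x * b x) A)\<^sup>2 \<le> infsum (\<lambda>x. (a x)\<^sup>2) A * infsum (\<lambda>x. (b x)\<^sup>2) A"
    unfolding P_def Sa_def Sb_def .
qed



locale ws =
  fixes E :: "('v \<times> 'v) set" and lam :: "'v \<Rightarrow> complex"
  assumes tree: "directed_tree E" and bdd: "ell2_bounded (wshift E lam)"
begin

abbreviation S where "S \<equiv> wshift E lam"

lemma uniq: "(u1,v)\<in>E \<Longrightarrow> (u2,v)\<in>E \<Longrightarrow> u1 = u2"
proof -
  have "\<forall>u1 u2 v. (u1, v) \<in> E \<and> (u2, v) \<in> E \<longrightarrow> u1 = u2"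
    using tree unfolding directed_tree_def by (rule conjunct2[OF conjunct2[OF conjunct2]])
  thus "(u1,v)\<in>E \<Longrightarrow> (u2,v)\<in>E \<Longrightarrow> u1 = u2" by blast
qed

lemma par_eq: "(u,v)\<in>E \<Longrightarrow> par E v = u"
  unfolding par_def by (rule the_equality) (auto intro: uniq)

lemma Vcirc_iff: "v \<in> Vcirc E \<longleftrightarrow> (par E v, v) \<in> E"
proof
  assume "v \<in> Vcirc E"
  then obtain u where "(u,v)\<in>E" unfolding Vcirc_def by blast
  thus "(par E v, v) \<in> E" using par_eq by simp
qed (auto simp: Vcirc_def)

lemma S_evec: "S (evec u) v = (if (u,v)\<in>E then lam v else 0)"
proof -
  have "v \<in> Vcirc E \<and> par E v = u \<longleftrightarrow> (u,v)\<in>E"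
    by (metis Vcirc_iff par_eq)
  thus ?thesis unfolding wshift_def evec_def by auto
qed

lemma fin_ell2: "finite F \<Longrightarrow> (\<And>v. v \<notin> F \<Longrightarrow> f v = 0) \<Longrightarrow> f \<in> ell2"
proof -
  assume a: "finite F" "\<And>v. v \<notin> F \<Longrightarrow> f v = 0"
  have "{x\<in>UNIV. (cmod (f x))\<^sup>2 \<noteq> 0} \<subseteq> F" using a by auto
  hence "finite {x\<in>UNIV. (cmod (f x))\<^sup>2 \<noteq> 0}" using a finite_subset by blast
  thus ?thesis unfolding ell2_def by (simp add: finite_nonzero_values_imp_summable_on)
qed

lemma evec_ell2: "evec u \<in> ell2"
  by (rule fin_ell2[of "{u}"]) (auto simp: evec_def)

lemma S_ell2: "f\<in>ell2 \<Longrightarrow> S f \<in> ell2"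
  using bdd unfolding ell2_bounded_def by blast

lemma norm_evec: "ell2_norm (evec u) = 1"
proof -
  have "(\<Sum>\<^sub>\<infinity>v. (cmod (evec u v))\<^sup>2) = (\<Sum>v\<in>UNIV \<inter> {u}. (cmod (evec u v))\<^sup>2)"
    by (rule infsum_fin_supp) (auto simp: evec_def)
  thus ?thesis unfolding ell2_norm_def by (simp add: evec_def)
qed

definition s where "s u = infsum (\<lambda>v. (cmod (lam v))\<^sup>2) (Chi E u)"

lemma lam_summ: "(\<lambda>v. (cmod (lam v))\<^sup>2) summable_on Chi E u"
proof -
  have "(\<lambda>v. (cmod (S (evec u) v))\<^sup>2) summable_on UNIV"
    using S_ell2[OF evec_ell2] unfolding ell2_def by simp
  hence "(\<lambda>v. (cmod (S (evec u) v))\<^sup>2) summable_on Chi E u"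
    by (rule summable_on_subset) simp
  thus ?thesis by (rule summable_on_cong[THEN iffD1, rotated]) (simp add: S_evec Chi_def)
qed

lemma nS: "ell2_norm (S (evec u)) = sqrt (s u)"
proof -
  have "(\<Sum>\<^sub>\<infinity>v. (cmod (S (evec u) v))\<^sup>2) = s u"
    unfolding s_def by (rule infsum_cong_neutral) (auto simp: S_evec Chi_def)
  thus ?thesis unfolding ell2_norm_def by simp
qed

lemma s_nonneg: "s u \<ge> 0"
  unfolding s_def by (rule infsum_nonneg) simp

lemma s_bounded: "\<exists>M. \<forall>u. s u \<le> M"
proof -
  obtain C where C: "\<forall>f\<in>ell2. ell2_norm (S f) \<le> C * ell2_norm f"
    using bdd unfolding ell2_bounded_def by blast
  have "sqrt (s u) \<le> C" for u using C evec_ell2[of u] nS[of u] norm_evec[of u] by force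
  hence "(sqrt (s u))\<^sup>2 \<le> C\<^sup>2" for u using s_nonneg[of u] by (intro power_mono) auto
  hence "s u \<le> C\<^sup>2" for u using s_nonneg[of u] by (metis real_sqrt_pow2)
  thus ?thesis by blast
qed

end



lemma infsum_of_real_eq:
  "f summable_on A \<Longrightarrow> infsum (\<lambda>x. complex_of_real (f x)) A = complex_of_real (infsum f A)"
  by (rule infsumI, rule has_sum_of_real, rule has_sum_infsum)

context ws begin

definition H where "H g u = infsum (\<lambda>v. cnj (lam v) * g v) (Chi E u)"

lemma g_summ: "g\<in>ell2 \<Longrightarrow> (\<lambda>v. (cmod (g v))\<^sup>2) summable_on A"
  unfolding ell2_def by (auto intro: summable_on_subset)

lemma Sigma_E: "Sigma UNIV (Chi E) = E" by (auto simp: Chi_def)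

lemma inj_snd: "inj_on snd E" unfolding inj_on_def using uniq by auto

lemma snd_E: "snd ` E = Vcirc E" unfolding Vcirc_def by force

lemma H_summ: "g \<in> ell2 \<Longrightarrow> (\<lambda>v. cnj (lam v) * g v) summable_on Chi E u"
proof -
  assume g: "g \<in> ell2"
  have "(\<lambda>v. cmod (lam v) * cmod (g v)) summable_on Chi E u"
    by (rule cs_real(1)) (auto intro: lam_summ g_summ[OF g])
  hence "(\<lambda>v. norm (cnj (lam v) * g v)) summable_on Chi E u" by (simp add: norm_mult)
  thus ?thesis by (rule abs_summable_summable)
qed

lemma H_bound: "g\<in>ell2 \<Longrightarrow> (cmod (H g u))\<^sup>2 \<le> s u * infsum (\<lambda>v. (cmod (g v))\<^sup>2) (Chi E u)"
proof -
  assume g: "g \<in> ell2"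
  have sm: "(\<lambda>v. cmod (lam v) * cmod (g v)) summable_on Chi E u"
    by (rule cs_real(1)) (auto intro: lam_summ g_summ[OF g])
  have "cmod (H g u) \<le> infsum (\<lambda>v. cmod (lam v) * cmod (g v)) (Chi E u)"
    unfolding H_def using norm_infsum_bound[of "\<lambda>v. cnj (lam v) * g v" "Chi E u"] sm
    by (simp add: norm_mult)
  hence "(cmod (H g u))\<^sup>2 \<le> (infsum (\<lambda>v. cmod (lam v) * cmod (g v)) (Chi E u))\<^sup>2"
    by (intro power_mono) auto
  also have "\<dots> \<le> s u * infsum (\<lambda>v. (cmod (g v))\<^sup>2) (Chi E u)"
    unfolding s_def by (rule cs_real(2)) (auto intro: lam_summ g_summ[OF g])
  finally show ?thesis .
qed

lemma G_summ: "g\<in>ell2 \<Longrightarrow> (\<lambda>u. infsum (\<lambda>v. (cmod (g v))\<^sup>2) (Chi E u)) summable_on UNIV"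
proof -
  assume g: "g \<in> ell2"
  have "(\<lambda>v. (cmod (g v))\<^sup>2) summable_on snd ` E" by (rule g_summ[OF g])
  hence "((\<lambda>v. (cmod (g v))\<^sup>2) \<circ> snd) summable_on E" using summable_on_reindex[OF inj_snd] by blast
  hence "(\<lambda>(u,v). (cmod (g v))\<^sup>2) summable_on Sigma UNIV (Chi E)"
    unfolding Sigma_E by (simp add: o_def case_prod_unfold)
  thus ?thesis by (rule summable_on_Sigma_banach)
qed

lemma H_ell2: "g\<in>ell2 \<Longrightarrow> H g \<in> ell2"
proof -
  assume g: "g \<in> ell2"
  obtain M where M: "\<And>u. s u \<le> M" using s_bounded by blast
  have "(\<lambda>u. M * infsum (\<lambda>v. (cmod (g v))\<^sup>2) (Chi E u)) summable_on UNIV"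
    by (intro summable_on_cmult_right G_summ g)
  hence "(\<lambda>u. (cmod (H g u))\<^sup>2) summable_on UNIV"
  proof (rule summable_on_comparison_test)
    fix u
    have G0: "infsum (\<lambda>v. (cmod (g v))\<^sup>2) (Chi E u) \<ge> 0" by (rule infsum_nonneg) simp
    have "(cmod (H g u))\<^sup>2 \<le> s u * infsum (\<lambda>v. (cmod (g v))\<^sup>2) (Chi E u)" by (rule H_bound[OF g])
    also have "\<dots> \<le> M * infsum (\<lambda>v. (cmod (g v))\<^sup>2) (Chi E u)" using G0 M by (intro mult_right_mono)
    finally show "(cmod (H g u))\<^sup>2 \<le> M * infsum (\<lambda>v. (cmod (g v))\<^sup>2) (Chi E u)" .
  qed simp
  thus ?thesis unfolding ell2_def by simp
qed

lemma adj_id: 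
  assumes f: "f\<in>ell2" and g: "g\<in>ell2"
  shows "ell2_inner (S f) g = ell2_inner f (H g)"
proof -
  define \<phi> where "\<phi> = (\<lambda>v. S f v * cnj (g v))"
  have "(\<lambda>v. cmod (S f v) * cmod (g v)) summable_on Vcirc E"
    by (rule cs_real(1)) (auto intro: g_summ g S_ell2 f)
  hence "(\<lambda>v. norm (\<phi> v)) summable_on Vcirc E" by (simp add: \<phi>_def norm_mult)
  hence "\<phi> summable_on snd ` E" unfolding snd_E by (rule abs_summable_summable)
  hence s1: "(\<phi> \<circ> snd) summable_on E" using summable_on_reindex[OF inj_snd] by blast
  have pt: "\<And>x. x \<in> E \<Longrightarrow> (\<phi> \<circ> snd) x = (\<lambda>(u,v). lam v * f u * cnj (g v)) x"
  proof -
    fix x assume x: "x \<in> E"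
    obtain u v where uv: "x = (u,v)" by fastforce
    have e: "(u,v) \<in> E" using x uv by simp
    hence "v \<in> Vcirc E" unfolding Vcirc_def by blast
    moreover have "par E v = u" using e by (rule par_eq)
    ultimately have "v \<in> Vcirc E" "par E v = u" by auto
    thus "(\<phi> \<circ> snd) x = (\<lambda>(u,v). lam v * f u * cnj (g v)) x"
      unfolding uv \<phi>_def wshift_def by simp
  qed
  have sE: "(\<lambda>(u,v). lam v * f u * cnj (g v)) summable_on E"
    using s1 summable_on_cong[of E "\<phi> \<circ> snd" "\<lambda>(u,v). lam v * f u * cnj (g v)"] pt by blast
  have "ell2_inner (S f) g = infsum \<phi> UNIV" unfolding ell2_inner_def \<phi>_def ..
  also have "\<dots> = infsum \<phi> (Vcirc E)"
    by (rule infsum_cong_neutral) (auto simp: \<phi>_def wshift_def)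
  also have "\<dots> = infsum (\<phi> \<circ> snd) E" unfolding snd_E[symmetric] by (rule infsum_reindex[OF inj_snd])
  also have "\<dots> = infsum (\<lambda>(u,v). lam v * f u * cnj (g v)) E"
    by (rule infsum_cong) (rule pt)
  also have "\<dots> = infsum (\<lambda>u. infsum (\<lambda>v. lam v * f u * cnj (g v)) (Chi E u)) UNIV"
    using infsum_Sigma'_banach[of "\<lambda>u v. lam v * f u * cnj (g v)" UNIV "Chi E"] sE
    unfolding Sigma_E by simp
  also have "\<dots> = infsum (\<lambda>u. f u * cnj (H g u)) UNIV"
  proof (rule infsum_cong)
    fix u
    have "infsum (\<lambda>v. lam v * f u * cnj (g v)) (Chi E u) 
          = infsum (\<lambda>v. f u * cnj (cnj (lam v) * g v)) (Chi E u)"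
      by (rule infsum_cong) (simp add: algebra_simps)
    also have "\<dots> = f u * infsum (\<lambda>v. cnj (cnj (lam v) * g v)) (Chi E u)"
    proof (rule infsum_cmult_right)
      show "(\<lambda>v. cnj (cnj (lam v) * g v)) summable_on Chi E u"
        using H_summ[OF g] by (simp only: summable_on_cnj_iff)
    qed
    also have "\<dots> = f u * cnj (H g u)" unfolding H_def by (simp only: infsum_cnj)
    finally show "infsum (\<lambda>v. lam v * f u * cnj (g v)) (Chi E u) = f u * cnj (H g u)" .
  qed
  also have "\<dots> = ell2_inner f (H g)" unfolding ell2_inner_def ..
  finally show ?thesis .
qed

lemma inner_evec: "ell2_inner (evec w) h = cnj (h w)"
proof -
  have "ell2_inner (evec w) h = (\<Sum>v\<in>UNIV \<inter> {w}. evec w v * cnj (h v))"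
    unfolding ell2_inner_def by (rule infsum_fin_supp) (auto simp: evec_def)
  thus ?thesis by (simp add: evec_def)
qed

lemma adj_eq: "g\<in>ell2 \<Longrightarrow> ell2_adj S g = H g"
  unfolding ell2_adj_def
proof (rule the_equality)
  assume g: "g \<in> ell2"
  show "H g \<in> ell2 \<and> (\<forall>f\<in>ell2. ell2_inner (S f) g = ell2_inner f (H g))"
    using H_ell2 adj_id g by blast
  fix h assume h: "h \<in> ell2 \<and> (\<forall>f\<in>ell2. ell2_inner (S f) g = ell2_inner f h)"
  show "h = H g"
  proof
    fix w
    have "cnj (h w) = ell2_inner (evec w) h" by (simp add: inner_evec)
    also have "\<dots> = ell2_inner (S (evec w)) g"
    proof -
      have "\<forall>f\<in>ell2. ell2_inner (S f) g = ell2_inner f h" using h by (rule conjunct2)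
      hence "ell2_inner (S (evec w)) g = ell2_inner (evec w) h" using evec_ell2[of w] by blast
      thus ?thesis by (rule sym)
    qed
    also have "\<dots> = ell2_inner (evec w) (H g)" using adj_id[OF evec_ell2 g] .
    also have "\<dots> = cnj (H g w)" by (simp add: inner_evec)
    finally show "h w = H g w" by simp
  qed
qed

lemma H_S: "H (S g) = (\<lambda>u. complex_of_real (s u) * g u)"
proof
  fix u
  have "H (S g) u = infsum (\<lambda>v. complex_of_real ((cmod (lam v))\<^sup>2) * g u) (Chi E u)"
    unfolding H_def
  proof (rule infsum_cong)
    fix v assume v: "v \<in> Chi E u"
    hence "S g v = lam v * g u" by (auto simp: wshift_def Chi_def Vcirc_def par_eq)
    hence "cnj (lam v) * S g v = (cnj (lam v) * lam v) * g u" by (simp add: mult.assoc)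
    also have "cnj (lam v) * lam v = complex_of_real ((cmod (lam v))\<^sup>2)"
      using complex_norm_square[of "lam v"] by (simp add: mult.commute)
    finally show "cnj (lam v) * S g v = complex_of_real ((cmod (lam v))\<^sup>2) * g u" .
  qed
  also have "\<dots> = infsum (\<lambda>v. complex_of_real ((cmod (lam v))\<^sup>2)) (Chi E u) * g u"
    by (rule infsum_cmult_left) (intro summable_on_of_real lam_summ)
  also have "\<dots> = complex_of_real (s u) * g u"
    unfolding s_def by (simp only: infsum_of_real_eq[OF lam_summ])
  finally show "H (S g) u = complex_of_real (s u) * g u" .
qed

end



context ws begin

lemma ker_iff: "g \<in> ell2_ker (ell2_adj S) \<longleftrightarrow> g \<in> ell2 \<and> H g = (\<lambda>_. 0)"
  unfolding ell2_ker_def using adj_eq by auto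

definition Q where "Q \<longleftrightarrow> (\<forall>w v1 v2. (w,v1)\<in>E \<longrightarrow> (w,v2)\<in>E \<longrightarrow> lam v1 \<noteq> 0 \<longrightarrow> lam v2 \<noteq> 0 \<longrightarrow> s v1 = s v2)"

lemma P_iff: "(\<forall>g\<in>ell2_ker (ell2_adj S). ell2_adj S (S g) \<in> ell2_ker (ell2_adj S))
   \<longleftrightarrow> (\<forall>g\<in>ell2. H g = (\<lambda>_. 0) \<longrightarrow> H (\<lambda>u. complex_of_real (s u) * g u) = (\<lambda>_. 0))"
proof -
  have "ell2_adj S (S g) \<in> ell2_ker (ell2_adj S) \<longleftrightarrow> H (\<lambda>u. complex_of_real (s u) * g u) = (\<lambda>_. 0)"
    if g: "g \<in> ell2" for g
  proof -
    have "ell2_adj S (S g) = (\<lambda>u. complex_of_real (s u) * g u)"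
      using adj_eq[OF S_ell2[OF g]] H_S by simp
    moreover have "(\<lambda>u. complex_of_real (s u) * g u) \<in> ell2"
      using H_ell2[OF S_ell2[OF g]] H_S by simp
    ultimately show ?thesis using ker_iff by simp
  qed
  thus ?thesis using ker_iff by blast
qed

lemma Q_imp:
  assumes q: Q and g: "g \<in> ell2" and hg: "H g = (\<lambda>_. 0)"
  shows "H (\<lambda>u. complex_of_real (s u) * g u) = (\<lambda>_. 0)"
proof
  fix u
  define c where "c = s (SOME v. (u,v)\<in>E \<and> lam v \<noteq> 0)"
  have "H (\<lambda>u. complex_of_real (s u) * g u) u 
        = infsum (\<lambda>v. complex_of_real c * (cnj (lam v) * g v)) (Chi E u)"
    unfolding H_def
  proof (rule infsum_cong)
    fix v assume v: "v \<in> Chi E u"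
    show "cnj (lam v) * (complex_of_real (s v) * g v) = complex_of_real c * (cnj (lam v) * g v)"
    proof (cases "lam v = 0")
      case False
      hence ex: "\<exists>v. (u,v)\<in>E \<and> lam v \<noteq> 0" using v by (auto simp: Chi_def)
      have "s v = c" unfolding c_def using someI_ex[OF ex] q v False unfolding Q_def Chi_def by blast
      thus ?thesis by (simp add: algebra_simps)
    qed simp
  qed
  also have "\<dots> = complex_of_real c * H g u"
    unfolding H_def by (rule infsum_cmult_right) (rule H_summ[OF g])
  finally show "H (\<lambda>u. complex_of_real (s u) * g u) u = 0" using hg by simp
qed

lemma notQ:
  assumes nq: "\<not> Q"
  shows "\<exists>g\<in>ell2. H g = (\<lambda>_. 0) \<and> H (\<lambda>u. complex_of_real (s u) * g u) \<noteq> (\<lambda>_. 0)"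
proof -
  obtain w v1 v2 where e1: "(w,v1)\<in>E" and e2: "(w,v2)\<in>E" and l1: "lam v1 \<noteq> 0" and l2: "lam v2 \<noteq> 0"
    and sd: "s v1 \<noteq> s v2" using nq unfolding Q_def by blast
  have d: "v1 \<noteq> v2" using sd by blast
  have chi: "Chi E u \<inter> {v1,v2} = (if u = w then {v1,v2} else {})" for u
  proof (cases "u = w")
    case False
    have "v1 \<notin> Chi E u" using False uniq[OF e1] by (auto simp: Chi_def)
    moreover have "v2 \<notin> Chi E u" using False uniq[OF e2] by (auto simp: Chi_def)
    ultimately show ?thesis using False by auto
  qed (use e1 e2 in \<open>auto simp: Chi_def\<close>)
  have Hfin: "H k u = (if u = w then cnj (lam v1) * k v1 + cnj (lam v2) * k v2 else 0)"
    if k: "\<And>v. v \<notin> {v1,v2} \<Longrightarrow> k v = 0" for k u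
  proof -
    have "H k u = (\<Sum>v\<in>Chi E u \<inter> {v1,v2}. cnj (lam v) * k v)"
      unfolding H_def by (rule infsum_fin_supp) (auto simp: k)
    thus ?thesis unfolding chi using d by simp
  qed
  define g where "g = (\<lambda>v. if v = v1 then 1 / cnj (lam v1) else if v = v2 then - 1 / cnj (lam v2) else 0)"
  have g0: "\<And>v. v \<notin> {v1,v2} \<Longrightarrow> g v = 0" unfolding g_def by auto
  have gl: "g \<in> ell2" by (rule fin_ell2[of "{v1,v2}"]) (auto simp: g0)
  have "H g = (\<lambda>_. 0)"
  proof
    fix u show "H g u = 0" using Hfin[of g u, OF g0] d l1 l2 by (simp add: g_def)
  qed
  moreover have "H (\<lambda>u. complex_of_real (s u) * g u) w \<noteq> 0"
  proof -
    have "H (\<lambda>u. complex_of_real (s u) * g u) w = complex_of_real (s v1) - complex_of_real (s v2)"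
      using Hfin[of "\<lambda>u. complex_of_real (s u) * g u" w] g0 d l1 l2 by (simp add: g_def)
    thus ?thesis using sd by simp
  qed
  ultimately show ?thesis using gl by fastforce
qed

lemma P_Q: "(\<forall>g\<in>ell2_ker (ell2_adj S). ell2_adj S (S g) \<in> ell2_ker (ell2_adj S)) \<longleftrightarrow> Q"
  unfolding P_iff using Q_imp notQ by metis

lemma E1_Q: "(\<exists>\<alpha>::'v \<Rightarrow> real. (\<forall>v\<in>Vplus E lam. \<alpha> v \<ge> 0) \<and>
                 (\<forall>u\<in>Vcirc E. lam u \<noteq> 0 \<longrightarrow> ell2_norm (S (evec u)) = \<alpha> (par E u))) \<longleftrightarrow> Q"
proof
  assume "\<exists>\<alpha>::'v \<Rightarrow> real. (\<forall>v\<in>Vplus E lam. \<alpha> v \<ge> 0) \<and>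
                 (\<forall>u\<in>Vcirc E. lam u \<noteq> 0 \<longrightarrow> ell2_norm (S (evec u)) = \<alpha> (par E u))"
  then obtain \<alpha> :: "'v \<Rightarrow> real" where a: "\<forall>u\<in>Vcirc E. lam u \<noteq> 0 \<longrightarrow> sqrt (s u) = \<alpha> (par E u)"
    unfolding nS by blast
  show Q unfolding Q_def
  proof (intro allI impI)
    fix w v1 v2 assume e1: "(w,v1)\<in>E" and e2: "(w,v2)\<in>E" and l1: "lam v1 \<noteq> 0" and l2: "lam v2 \<noteq> 0"
    have "sqrt (s v1) = \<alpha> w" using a e1 l1 par_eq[OF e1] unfolding Vcirc_def by blast
    moreover have "sqrt (s v2) = \<alpha> w" using a e2 l2 par_eq[OF e2] unfolding Vcirc_def by blast
    ultimately have "sqrt (s v1) = sqrt (s v2)" by simp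
    thus "s v1 = s v2" by simp
  qed
next
  assume q: Q
  define \<alpha> where "\<alpha> w = sqrt (s (SOME v. (w,v)\<in>E \<and> lam v \<noteq> 0))" for w
  have "(\<forall>v\<in>Vplus E lam. \<alpha> v \<ge> 0) \<and> (\<forall>u\<in>Vcirc E. lam u \<noteq> 0 \<longrightarrow> ell2_norm (S (evec u)) = \<alpha> (par E u))"
  proof (intro conjI ballI impI)
    fix v show "\<alpha> v \<ge> 0" unfolding \<alpha>_def using s_nonneg by simp
  next
    fix u assume u: "u \<in> Vcirc E" and l: "lam u \<noteq> 0"
    have e: "(par E u, u) \<in> E" using u Vcirc_iff by blast
    hence ex: "\<exists>v. (par E u,v)\<in>E \<and> lam v \<noteq> 0" using l by blast
    have "s u = s (SOME v. (par E u,v)\<in>E \<and> lam v \<noteq> 0)"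
      using someI_ex[OF ex] q e l unfolding Q_def by blast
    thus "ell2_norm (S (evec u)) = \<alpha> (par E u)" unfolding nS \<alpha>_def by simp
  qed
  thus "\<exists>\<alpha>::'v \<Rightarrow> real. (\<forall>v\<in>Vplus E lam. \<alpha> v \<ge> 0) \<and>
                 (\<forall>u\<in>Vcirc E. lam u \<noteq> 0 \<longrightarrow> ell2_norm (S (evec u)) = \<alpha> (par E u))" by blast
qed

lemma E2_Q:
  assumes nz: "\<forall>v\<in>Vcirc E. lam v \<noteq> 0"
  shows "(\<exists>\<alpha>::'v \<Rightarrow> real. (\<forall>v. \<alpha> v \<ge> 0) \<and>
                 (\<forall>u\<in>Vcirc E. ell2_norm (S (evec u)) = \<alpha> (par E u))) \<longleftrightarrow> Q"
proof
  assume "\<exists>\<alpha>::'v \<Rightarrow> real. (\<forall>v. \<alpha> v \<ge> 0) \<and>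
                 (\<forall>u\<in>Vcirc E. ell2_norm (S (evec u)) = \<alpha> (par E u))"
  hence "\<exists>\<alpha>::'v \<Rightarrow> real. (\<forall>v\<in>Vplus E lam. \<alpha> v \<ge> 0) \<and>
                 (\<forall>u\<in>Vcirc E. lam u \<noteq> 0 \<longrightarrow> ell2_norm (S (evec u)) = \<alpha> (par E u))" by blast
  thus Q using E1_Q by blast
next
  assume Q
  then obtain \<alpha> :: "'v \<Rightarrow> real" where a: "(\<forall>v\<in>Vplus E lam. \<alpha> v \<ge> 0)"
    "(\<forall>u\<in>Vcirc E. lam u \<noteq> 0 \<longrightarrow> ell2_norm (S (evec u)) = \<alpha> (par E u))" using E1_Q by blast
  define \<beta> where "\<beta> v = max 0 (\<alpha> v)" for v
  have "(\<forall>v. \<beta> v \<ge> 0) \<and> (\<forall>u\<in>Vcirc E. ell2_norm (S (evec u)) = \<beta> (par E u))"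
  proof (intro conjI allI ballI)
    fix v show "\<beta> v \<ge> 0" unfolding \<beta>_def by simp
  next
    fix u assume u: "u \<in> Vcirc E"
    have "ell2_norm (S (evec u)) = \<alpha> (par E u)" using a(2) u nz by blast
    moreover have "ell2_norm (S (evec u)) \<ge> 0" unfolding nS using s_nonneg[of u] by simp
    ultimately show "ell2_norm (S (evec u)) = \<beta> (par E u)" unfolding \<beta>_def by simp
  qed
  thus "\<exists>\<alpha>::'v \<Rightarrow> real. (\<forall>v. \<alpha> v \<ge> 0) \<and>
                 (\<forall>u\<in>Vcirc E. ell2_norm (S (evec u)) = \<alpha> (par E u))" by blast
qed

end

theorem mainTheorem13:
  fixes E :: "('v \<times> 'v) set" and lam :: "'v \<Rightarrow> complex"
  assumes tree: "directed_tree E"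
    and bdd: "ell2_bounded (wshift E lam)"
  shows "((\<forall>g\<in>ell2_ker (ell2_adj (wshift E lam)).
             ell2_adj (wshift E lam) (wshift E lam g) \<in> ell2_ker (ell2_adj (wshift E lam)))
          \<longleftrightarrow> (\<exists>\<alpha>::'v \<Rightarrow> real. (\<forall>v\<in>Vplus E lam. \<alpha> v \<ge> 0) \<and>
                 (\<forall>u\<in>Vcirc E. lam u \<noteq> 0 \<longrightarrow> ell2_norm (wshift E lam (evec u)) = \<alpha> (par E u))))
       \<and> (leafless E \<and> (\<forall>v\<in>Vcirc E. lam v \<noteq> 0) \<longrightarrow>
          ((\<forall>g\<in>ell2_ker (ell2_adj (wshift E lam)).
             ell2_adj (wshift E lam) (wshift E lam g) \<in> ell2_ker (ell2_adj (wshift E lam)))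
          \<longleftrightarrow> (\<exists>\<alpha>::'v \<Rightarrow> real. (\<forall>v. \<alpha> v \<ge> 0) \<and>
                 (\<forall>u\<in>Vcirc E. ell2_norm (wshift E lam (evec u)) = \<alpha> (par E u)))))"
proof -
  interpret ws E lam using tree bdd by unfold_locales
  show ?thesis using P_Q E1_Q E2_Q by blast
qed


end
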